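(* Let $G$ be a connected graph with diameter $d\in\{3,4\}$. If $\dim(G)=n(G)-d$, then $D(G)=n(G)-2$ if and only if $G$ is isomorphic to $P_4$.
   Context: All graphs are finite and simple; $n(G)=|V(G)|$; $P_4$ is the path on four vertices; the diameter is the largest distance between two vertices. For a connected graph $G$ with shortest-path distance $d_G$, a set $S\subseteq V(G)$ is resolving if for any two distinct vertices $x,y$ there is $s\in S$ with $d_G(x,s)\neq d_G(y,s)$; the metric dimension $\dim(G)$ is the minimum size of a resolving set. A distinguishing coloring of a graph $G$ is a (not necessarily proper) vertex coloring such that the only automorphism of $G$ mapping every vertex to a vertex of the same color is the identity; the distinguishing number $D(G)$ is the minimum number of colors in a distinguishing coloring of $G$. *)

theory Defs
  imports Main
begin

definition simple_graph :: "'a set \<Rightarrow> ('a \<Rightarrow> 'a \<Rightarrow> bool) \<Rightarrow> bool" where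
  "simple_graph V E \<longleftrightarrow> finite V \<and> (\<forall>x y. E x y \<longrightarrow> x \<in> V \<and> y \<in> V)
     \<and> (\<forall>x y. E x y \<longrightarrow> E y x) \<and> (\<forall>x. \<not> E x x)"

definition walk :: "'a set \<Rightarrow> ('a \<Rightarrow> 'a \<Rightarrow> bool) \<Rightarrow> 'a list \<Rightarrow> bool" where
  "walk V E xs \<longleftrightarrow> xs \<noteq> [] \<and> set xs \<subseteq> V \<and> (\<forall>i. Suc i < length xs \<longrightarrow> E (xs ! i) (xs ! Suc i))"

definition connected_graph :: "'a set \<Rightarrow> ('a \<Rightarrow> 'a \<Rightarrow> bool) \<Rightarrow> bool" where
  "connected_graph V E \<longleftrightarrow> V \<noteq> {} \<and>
     (\<forall>x\<in>V. \<forall>y\<in>V. \<exists>xs. walk V E xs \<and> hd xs = x \<and> last xs = y)"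

definition gdist :: "'a set \<Rightarrow> ('a \<Rightarrow> 'a \<Rightarrow> bool) \<Rightarrow> 'a \<Rightarrow> 'a \<Rightarrow> nat" where
  "gdist V E x y = (LEAST n. \<exists>xs. walk V E xs \<and> hd xs = x \<and> last xs = y \<and> length xs = Suc n)"

definition diameter :: "'a set \<Rightarrow> ('a \<Rightarrow> 'a \<Rightarrow> bool) \<Rightarrow> nat" where
  "diameter V E = Max {gdist V E x y | x y. x \<in> V \<and> y \<in> V}"

definition resolving :: "'a set \<Rightarrow> ('a \<Rightarrow> 'a \<Rightarrow> bool) \<Rightarrow> 'a set \<Rightarrow> bool" where
  "resolving V E S \<longleftrightarrow> S \<subseteq> V \<and>
     (\<forall>x\<in>V. \<forall>y\<in>V. x \<noteq> y \<longrightarrow> (\<exists>s\<in>S. gdist V E x s \<noteq> gdist V E y s))"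

definition metric_dim :: "'a set \<Rightarrow> ('a \<Rightarrow> 'a \<Rightarrow> bool) \<Rightarrow> nat" where
  "metric_dim V E = (LEAST k. \<exists>S. resolving V E S \<and> card S = k)"

definition automorphism :: "'a set \<Rightarrow> ('a \<Rightarrow> 'a \<Rightarrow> bool) \<Rightarrow> ('a \<Rightarrow> 'a) \<Rightarrow> bool" where
  "automorphism V E f \<longleftrightarrow> bij_betw f V V \<and> (\<forall>x\<in>V. \<forall>y\<in>V. E x y \<longleftrightarrow> E (f x) (f y))"

definition distinguishing_coloring ::
  "'a set \<Rightarrow> ('a \<Rightarrow> 'a \<Rightarrow> bool) \<Rightarrow> nat \<Rightarrow> ('a \<Rightarrow> nat) \<Rightarrow> bool" where
  "distinguishing_coloring V E k c \<longleftrightarrow> c ` V \<subseteq> {..<k} \<and>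
     (\<forall>f. automorphism V E f \<and> (\<forall>x\<in>V. c (f x) = c x) \<longrightarrow> (\<forall>x\<in>V. f x = x))"

definition distinguishing_number :: "'a set \<Rightarrow> ('a \<Rightarrow> 'a \<Rightarrow> bool) \<Rightarrow> nat" where
  "distinguishing_number V E = (LEAST k. \<exists>c. distinguishing_coloring V E k c)"

definition iso_P4 :: "'a set \<Rightarrow> ('a \<Rightarrow> 'a \<Rightarrow> bool) \<Rightarrow> bool" where
  "iso_P4 V E \<longleftrightarrow> (\<exists>f. bij_betw f V {0..<4::nat} \<and>
     (\<forall>x\<in>V. \<forall>y\<in>V. E x y \<longleftrightarrow> (f x = Suc (f y) \<or> f y = Suc (f x))))"

end

theory Submission imports Defs begin

lemma walk_succ: "walk V E xs \<longleftrightarrow> xs \<noteq> [] \<and> set xs \<subseteq> V \<and> successively E xs"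
  unfolding walk_def successively_conv_nth by blast

lemma gdist_le:
  assumes "walk V E xs" "hd xs = x" "last xs = y"
  shows "gdist V E x y \<le> length xs - 1"
proof -
  have "xs \<noteq> []" using assms(1) by (simp add: walk_def)
  then have "length xs = Suc (length xs - 1)" by simp
  then show ?thesis unfolding gdist_def using assms by (intro Least_le) blast
qed

context
  fixes V :: "'a set" and E
  assumes G: "simple_graph V E" and C: "connected_graph V E"
begin

lemma Esym: "E x y \<Longrightarrow> E y x" using G by (simp add: simple_graph_def)
lemma EV: "E x y \<Longrightarrow> x \<in> V \<and> y \<in> V" using G by (simp add: simple_graph_def)
lemma Eirr: "\<not> E x x" using G by (simp add: simple_graph_def)

lemma gdist_ex:
  assumes "x \<in> V" "y \<in> V"
  shows "\<exists>xs. walk V E xs \<and> hd xs = x \<and> last xs = y \<and> length xs = Suc (gdist V E x y)"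
proof -
  obtain xs where "walk V E xs" "hd xs = x" "last xs = y" using C assms unfolding connected_graph_def by blast
  moreover have "xs \<noteq> []" using \<open>walk V E xs\<close> by (simp add: walk_def)
  ultimately have "\<exists>n xs. walk V E xs \<and> hd xs = x \<and> last xs = y \<and> length xs = Suc n"
    by (intro exI[of _ "length xs - 1"] exI[of _ xs]) auto
  then show ?thesis unfolding gdist_def by (rule LeastI_ex)
qed

lemma gdist_sym:
  assumes "x \<in> V" "y \<in> V" shows "gdist V E x y = gdist V E y x"
proof -
  have *: "gdist V E b a \<le> gdist V E a b" if ab: "a \<in> V" "b \<in> V" for a b
  proof -
    obtain xs where xs: "walk V E xs" "hd xs = a" "last xs = b" "length xs = Suc (gdist V E a b)"
      using gdist_ex[OF ab] by blast
    have "walk V E (rev xs)" using xs(1) Esym unfolding walk_succ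
      by (auto intro: successively_mono)
    moreover have "hd (rev xs) = b" "last (rev xs) = a" using xs by (auto simp: walk_def hd_rev last_rev)
    ultimately have "gdist V E b a \<le> length (rev xs) - 1" by (rule gdist_le)
    then show ?thesis using xs by simp
  qed
  show ?thesis using *[OF assms] *[OF assms(2,1)] by simp
qed

lemma gdist_tri:
  assumes "x \<in> V" "y \<in> V" "z \<in> V"
  shows "gdist V E x z \<le> gdist V E x y + gdist V E y z"
proof -
  obtain xs where xs: "walk V E xs" "hd xs = x" "last xs = y" "length xs = Suc (gdist V E x y)"
    using gdist_ex assms by blast
  obtain ys where ys: "walk V E ys" "hd ys = y" "last ys = z" "length ys = Suc (gdist V E y z)"
    using gdist_ex assms by blast
  have ne: "xs \<noteq> []" "ys \<noteq> []" using xs ys by (auto simp: walk_def)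
  have "ys = hd ys # tl ys" using ne by simp
  then have "successively E ys" using ys(1) walk_succ by blast
  have st: "successively E (tl ys)" using \<open>successively E ys\<close> ne
    by (cases ys) (auto simp: successively_Cons)
  have "walk V E (xs @ tl ys)"
    unfolding walk_succ successively_append_iff
  proof (intro conjI)
    show "xs @ tl ys \<noteq> []" using ne by simp
    show "set (xs @ tl ys) \<subseteq> V" using xs(1) ys(1) ne by (auto simp: walk_def dest: list.set_sel(2))
    show "successively E xs" using xs(1) walk_succ by blast
    show "successively E (tl ys)" by (rule st)
    show "xs = [] \<or> tl ys = [] \<or> E (last xs) (hd (tl ys))"
      using \<open>successively E ys\<close> ne xs(3) ys(2) by (cases ys; cases "tl ys") (auto simp: successively_Cons)
  qed
  moreover have "hd (xs @ tl ys) = x" using ne xs by simp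
  moreover have "last (xs @ tl ys) = z"
  proof (cases "tl ys = []")
    case True
    then have "ys = [hd ys]" using ne by (metis list.collapse)
    then show ?thesis using ne xs ys True by (metis last.simps last_snoc append_Nil2)
  next
    case False
    then show ?thesis using ne ys by (simp add: last_tl)
  qed
  ultimately have "gdist V E x z \<le> length (xs @ tl ys) - 1" by (rule gdist_le)
  then show ?thesis using xs ys ne by simp
qed

lemma gdist_0: "x \<in> V \<Longrightarrow> gdist V E x x = 0"
  using gdist_le[of V E "[x]" x x] by (simp add: walk_def)

lemma gdist_0_iff: assumes "x \<in> V" "y \<in> V" shows "gdist V E x y = 0 \<longleftrightarrow> x = y"
proof
  assume "gdist V E x y = 0"
  then obtain xs where "walk V E xs" "hd xs = x" "last xs = y" "length xs = 1"
    using gdist_ex assms by fastforce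
  then show "x = y" by (cases xs) auto
qed (use gdist_0 assms in auto)

lemma gdist_1_iff: assumes "x \<in> V" "y \<in> V" shows "E x y \<longleftrightarrow> gdist V E x y = 1"
proof
  assume e: "E x y"
  then have "gdist V E x y \<le> 1" using gdist_le[of V E "[x,y]" x y] assms by (simp add: walk_def)
  moreover have "x \<noteq> y" using e Eirr by blast
  ultimately show "gdist V E x y = 1" using gdist_0_iff assms by fastforce
next
  assume "gdist V E x y = 1"
  then obtain xs where xs: "walk V E xs" "hd xs = x" "last xs = y" "length xs = 2"
    using gdist_ex assms by fastforce
  then obtain a b where "xs = [a,b]" by (cases xs; cases "tl xs") auto
  then show "E x y" using xs by (auto simp: walk_def)
qed

lemma walk_map:
  assumes "automorphism V E f" "walk V E xs"
  shows "walk V E (map f xs)"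
proof -
  have fV: "f ` V \<subseteq> V" using assms(1) by (auto simp: automorphism_def bij_betw_def)
  have "successively E xs" "set xs \<subseteq> V" "xs \<noteq> []" using assms(2) unfolding walk_succ by auto
  moreover have "successively (\<lambda>a b. E (f a) (f b)) xs"
    using \<open>successively E xs\<close> \<open>set xs \<subseteq> V\<close> assms(1)
    by (subst successively_cong[where Q = E]) (auto simp: automorphism_def)
  ultimately show ?thesis unfolding walk_succ successively_map using fV by auto
qed

lemma gdist_aut_le:
  assumes "automorphism V E f" "x \<in> V" "y \<in> V"
  shows "gdist V E (f x) (f y) \<le> gdist V E x y"
proof -
  obtain xs where xs: "walk V E xs" "hd xs = x" "last xs = y" "length xs = Suc (gdist V E x y)"
    using gdist_ex assms by blast
  have ne: "xs \<noteq> []" using xs by (auto simp: walk_def)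
  have "gdist V E (f x) (f y) \<le> length (map f xs) - 1"
    by (rule gdist_le) (use walk_map[OF assms(1) xs(1)] xs ne in \<open>auto simp: hd_map last_map\<close>)
  then show ?thesis using xs by simp
qed

lemma aut_inv:
  assumes "automorphism V E f"
  shows "automorphism V E (the_inv_into V f)"
proof -
  have b: "bij_betw f V V" using assms by (simp add: automorphism_def)
  have b2: "bij_betw (the_inv_into V f) V V" using bij_betw_the_inv_into[OF b] .
  show ?thesis unfolding automorphism_def
  proof (intro conjI b2 ballI)
    fix x y assume "x \<in> V" "y \<in> V"
    then show "E x y = E (the_inv_into V f x) (the_inv_into V f y)"
    proof -
      have a: "the_inv_into V f x \<in> V" "the_inv_into V f y \<in> V"
        using b2 \<open>x \<in> V\<close> \<open>y \<in> V\<close> by (auto simp: bij_betw_def)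
      have fa: "f (the_inv_into V f x) = x" "f (the_inv_into V f y) = y"
        using b \<open>x \<in> V\<close> \<open>y \<in> V\<close> by (auto simp: bij_betw_def f_the_inv_into_f)
      have "E (the_inv_into V f x) (the_inv_into V f y) \<longleftrightarrow> E (f (the_inv_into V f x)) (f (the_inv_into V f y))"
        using assms a unfolding automorphism_def by blast
      then show ?thesis using fa by simp
    qed
  qed
qed

lemma gdist_aut:
  assumes "automorphism V E f" "x \<in> V" "y \<in> V"
  shows "gdist V E (f x) (f y) = gdist V E x y"
proof -
  let ?g = "the_inv_into V f"
  have b: "bij_betw f V V" using assms by (simp add: automorphism_def)
  have fx: "f x \<in> V" "f y \<in> V" using b assms by (auto simp: bij_betw_def)
  have "gdist V E (?g (f x)) (?g (f y)) \<le> gdist V E (f x) (f y)"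
    by (rule gdist_aut_le[OF aut_inv[OF assms(1)] fx])
  moreover have "?g (f x) = x" "?g (f y) = y" using b assms
    by (auto simp: bij_betw_def the_inv_into_f_f)
  ultimately show ?thesis using gdist_aut_le[OF assms] by simp
qed

lemma walk_sub:
  assumes "walk V E xs" "i \<le> j" "j < length xs"
  shows "gdist V E (xs ! i) (xs ! j) \<le> j - i"
proof -
  let ?ys = "take (Suc j - i) (drop i xs)"
  have len: "length ?ys = Suc j - i" using assms by simp
  have nth: "?ys ! k = xs ! (i + k)" if "k < Suc j - i" for k using that assms by simp
  have "walk V E ?ys" unfolding walk_def
  proof (intro conjI allI impI)
    show "?ys \<noteq> []" using assms by simp
    show "set ?ys \<subseteq> V" using assms(1) unfolding walk_def
      by (meson order_trans set_drop_subset set_take_subset)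
    fix k assume k: "Suc k < length ?ys"
    have "Suc (i + k) < length xs" using k len assms by simp
    then have "E (xs ! (i + k)) (xs ! Suc (i + k))" using assms(1) unfolding walk_def by blast
    moreover have "?ys ! k = xs ! (i + k)" using k len by (intro nth) simp
    moreover have "?ys ! Suc k = xs ! Suc (i + k)" using k len nth[of "Suc k"] by simp
    ultimately show "E (?ys ! k) (?ys ! Suc k)" by simp
  qed
  moreover have "hd ?ys = xs ! i" using assms by (simp add: hd_conv_nth nth)
  moreover have "last ?ys = xs ! j" using assms len by (simp add: last_conv_nth nth)
  ultimately have "gdist V E (xs ! i) (xs ! j) \<le> length ?ys - 1" by (rule gdist_le)
  then show ?thesis using len by simp
qed

lemma diam_path:
  assumes "diameter V E \<ge> 3"
  shows "\<exists>v0 v1 v2 v3. v0 \<in> V \<and> v1 \<in> V \<and> v2 \<in> V \<and> v3 \<in> V \<and>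
     gdist V E v0 v1 = 1 \<and> gdist V E v0 v2 = 2 \<and> gdist V E v0 v3 = 3 \<and>
     gdist V E v1 v2 = 1 \<and> gdist V E v1 v3 = 2 \<and> gdist V E v2 v3 = 1"
proof -
  let ?S = "{gdist V E x y | x y. x \<in> V \<and> y \<in> V}"
  have fin: "finite V" "V \<noteq> {}" using G C by (auto simp: simple_graph_def connected_graph_def)
  have "?S = (\<lambda>(x,y). gdist V E x y) ` (V \<times> V)" by auto
  then have "finite ?S" using fin by simp
  moreover have "?S \<noteq> {}" using fin by auto
  ultimately have "diameter V E \<in> ?S" unfolding diameter_def by (rule Max_in)
  then obtain x y where xy: "x \<in> V" "y \<in> V" "gdist V E x y = diameter V E" by auto
  define D where "D = diameter V E"
  obtain xs where xs: "walk V E xs" "hd xs = x" "last xs = y" "length xs = Suc D"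
    using gdist_ex[OF xy(1,2)] xy(3) D_def by auto
  have x0: "xs ! 0 = x" using xs by (simp add: hd_conv_nth walk_def)
  have xD: "xs ! D = y" using xs by (simp add: last_conv_nth walk_def)
  have inV: "xs ! k \<in> V" if "k \<le> D" for k using xs that unfolding walk_def
    by (metis in_mono le_imp_less_Suc nth_mem)
  have eq: "gdist V E (xs ! i) (xs ! j) = j - i" if "i \<le> j" "j \<le> D" for i j
  proof -
    have up: "gdist V E (xs ! i) (xs ! j) \<le> j - i" using walk_sub[OF xs(1) that(1)] that xs by simp
    have a: "gdist V E x (xs ! i) \<le> i" using walk_sub[OF xs(1), of 0 i] that xs x0 by simp
    have b: "gdist V E (xs ! j) y \<le> D - j" using walk_sub[OF xs(1), of j D] that xs xD by simp
    have "D \<le> gdist V E x (xs ! i) + gdist V E (xs ! i) y"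
      using gdist_tri[OF xy(1) inV[of i] xy(2)] xy(3) D_def that by simp
    also have "gdist V E (xs ! i) y \<le> gdist V E (xs ! i) (xs ! j) + gdist V E (xs ! j) y"
      using gdist_tri[OF inV[of i] inV[of j] xy(2)] that by simp
    finally show ?thesis using a b up that by linarith
  qed
  have D3: "3 \<le> D" using assms D_def by simp
  show ?thesis
    apply (rule exI[of _ "xs ! 0"], rule exI[of _ "xs ! 1"], rule exI[of _ "xs ! 2"], rule exI[of _ "xs ! 3"])
    using D3 inV eq by auto
qed


lemma key_col:
  assumes V: "a \<in> V" "b \<in> V" "c \<in> V" "p \<in> V" "w \<in> V"
    and dist: "distinct [a,b,c,p,w]"
    and inj: "inj_on (\<lambda>x. gdist V E x p) {a,b,c}"
    and wit: "\<exists>x\<in>{a,b,c}. \<forall>y\<in>{a,b,c}. gdist V E y w \<noteq> gdist V E x p"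
  shows "\<exists>col. distinguishing_coloring V E (card V - 3) col"
proof -
  let ?X = "{a,b,c}"
  define W where "W = V - ?X - {p,w}"
  have finV: "finite V" using G by (simp add: simple_graph_def)
  have sub: "?X \<union> {p,w} \<subseteq> V" using V by auto
  have c5: "card (?X \<union> {p,w}) = 5" using dist by auto
  have WV: "W = V - (?X \<union> {p,w})" unfolding W_def by auto
  have cW: "card W = card V - 5" unfolding WV using card_Diff_subset[OF finite_subset[OF sub finV] sub] c5 by simp
  have n5: "card V \<ge> 5" using card_mono[OF finV sub] c5 by simp
  obtain h where h: "bij_betw h W {0..<card W}" using ex_bij_betw_finite_nat[of W] finV W_def by auto
  define col where "col x = (if x \<in> ?X then 0 else if x = p \<or> x = w then 1 else h x + 2)" for x
  have colW: "x \<in> V \<Longrightarrow> col x \<ge> 2 \<longleftrightarrow> x \<in> W" for x unfolding col_def W_def by auto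
  show ?thesis
  proof (intro exI[of _ col], unfold distinguishing_coloring_def, intro conjI allI impI)
    show "col ` V \<subseteq> {..<card V - 3}"
    proof
      fix y assume "y \<in> col ` V"
      then obtain x where x: "x \<in> V" "y = col x" by auto
      show "y \<in> {..<card V - 3}"
      proof (cases "x \<in> W")
        case True
        then have "h x < card W" using h by (auto simp: bij_betw_def)
        then show ?thesis using x True cW n5 unfolding col_def W_def by auto
      next
        case False
        then show ?thesis using x n5 unfolding col_def W_def by auto
      qed
    qed
    fix f assume fa: "automorphism V E f \<and> (\<forall>x\<in>V. col (f x) = col x)"
    have aut: "automorphism V E f" and cp: "\<And>x. x \<in> V \<Longrightarrow> col (f x) = col x" using fa by auto
    have bf: "bij_betw f V V" using aut by (simp add: automorphism_def)
    have fV: "\<And>x. x \<in> V \<Longrightarrow> f x \<in> V" using bf by (auto simp: bij_betw_def)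
    have finj: "inj_on f V" using bf by (simp add: bij_betw_def)
    have gd: "\<And>x y. x \<in> V \<Longrightarrow> y \<in> V \<Longrightarrow> gdist V E (f x) (f y) = gdist V E x y"
      using gdist_aut[OF aut] by blast
    have hinj: "inj_on h W" using h by (simp add: bij_betw_def)
    have fixW: "f x = x" if "x \<in> W" for x
    proof -
      have xV: "x \<in> V" using that W_def by auto
      have "col (f x) = h x + 2" using cp[OF xV] that unfolding col_def W_def by auto
      then have "f x \<in> W" using colW[OF fV[OF xV]] by simp
      then have "h (f x) = h x" using \<open>col (f x) = h x + 2\<close> unfolding col_def W_def by auto
      then show ?thesis using hinj \<open>f x \<in> W\<close> that by (auto dest: inj_onD)
    qed
    have inX: "f x \<in> ?X" if "x \<in> ?X" for x
    proof -
      have "x \<in> V" using that V by auto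
      then have "col (f x) = 0" using cp that unfolding col_def by auto
      then show ?thesis unfolding col_def by (auto split: if_splits)
    qed
    have fp: "f p = p"
    proof -
      have "col (f p) = 1" using cp[OF V(4)] dist unfolding col_def by auto
      then have o: "f p = p \<or> f p = w" unfolding col_def by (auto split: if_splits)
      show ?thesis
      proof (rule ccontr)
        assume "f p \<noteq> p"
        then have "f p = w" using o by simp
        obtain x where x: "x \<in> ?X" "\<forall>y\<in>?X. gdist V E y w \<noteq> gdist V E x p" using wit by blast
        have "f x \<in> ?X" using inX x(1) .
        moreover have "gdist V E (f x) w = gdist V E x p" using gd[of x p] x(1) V \<open>f p = w\<close> by auto
        ultimately show False using x(2) by blast
      qed
    qed
    have fw: "f w = w"
    proof -
      have "col (f w) = 1" using cp[OF V(5)] dist unfolding col_def by auto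
      then have o: "f w = p \<or> f w = w" unfolding col_def by (auto split: if_splits)
      moreover have "f w \<noteq> p" using fp finj V dist by (metis distinct_length_2_or_more inj_on_contraD list.set_intros(1) set_subset_Cons subsetD)
      ultimately show ?thesis by simp
    qed
    have fixX: "f x = x" if "x \<in> ?X" for x
    proof -
      have xV: "x \<in> V" using that V by auto
      have "gdist V E (f x) p = gdist V E x p" using gd[OF xV V(4)] fp by simp
      then show ?thesis using inj_onD[OF inj _ inX[OF that] that] by simp
    qed
    show "\<forall>x\<in>V. f x = x"
    proof
      fix x assume "x \<in> V"
      then consider "x \<in> W" | "x \<in> ?X" | "x = p" | "x = w" unfolding W_def by blast
      then show "f x = x" using fixW fixX fp fw by cases auto
    qed
  qed
qed


lemma big_col:
  assumes "diameter V E \<ge> 3" "card V \<ge> 5"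
  shows "\<exists>col. distinguishing_coloring V E (card V - 3) col"
proof -
  obtain v0 v1 v2 v3 where vV: "v0 \<in> V" "v1 \<in> V" "v2 \<in> V" "v3 \<in> V" and
    d: "gdist V E v0 v1 = 1" "gdist V E v0 v2 = 2" "gdist V E v0 v3 = 3"
     "gdist V E v1 v2 = 1" "gdist V E v1 v3 = 2" "gdist V E v2 v3 = 1"
    using diam_path[OF assms(1)] by blast
  have d': "gdist V E v1 v0 = 1" "gdist V E v2 v0 = 2" "gdist V E v3 v0 = 3"
     "gdist V E v2 v1 = 1" "gdist V E v3 v1 = 2" "gdist V E v3 v2 = 1"
    using d gdist_sym vV by metis+
  have ne: "v0 \<noteq> v1" "v0 \<noteq> v2" "v0 \<noteq> v3" "v1 \<noteq> v2" "v1 \<noteq> v3" "v2 \<noteq> v3"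
    using d gdist_0 vV by force+
  have finV: "finite V" using G by (simp add: simple_graph_def)
  have "card {v0,v1,v2,v3} = 4" using ne by auto
  then have "{v0,v1,v2,v3} \<noteq> V" using assms(2) by auto
  then obtain w where w: "w \<in> V" "w \<notin> {v0,v1,v2,v3}" using vV by blast
  have wne: "w \<noteq> v0" "w \<noteq> v1" "w \<noteq> v2" "w \<noteq> v3" using w by auto
  have tri: "\<And>x y z. x \<in> V \<Longrightarrow> y \<in> V \<Longrightarrow> z \<in> V \<Longrightarrow> gdist V E x z \<le> gdist V E x y + gdist V E y z"
    using gdist_tri by blast
  have A: ?thesis if "gdist V E v1 w = 1 \<or> (gdist V E v0 w \<noteq> 1 \<and> gdist V E v1 w \<noteq> 1 \<and> gdist V E v2 w \<noteq> 1)"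
  proof (rule key_col[of v0 v1 v2 v3 w])
    show "inj_on (\<lambda>x. gdist V E x v3) {v0, v1, v2}" using d by auto
    show "distinct [v0, v1, v2, v3, w]" using ne wne by auto
    show "\<exists>x\<in>{v0, v1, v2}. \<forall>y\<in>{v0, v1, v2}. gdist V E y w \<noteq> gdist V E x v3"
    proof (cases "gdist V E v1 w = 1")
      case True
      have "gdist V E v0 w \<le> 2" using tri[OF vV(1) vV(2) w(1)] d True by simp
      moreover have "gdist V E v2 w \<le> 2" using tri[OF vV(3) vV(2) w(1)] d' True by simp
      ultimately show ?thesis using d True by (intro bexI[of _ v0]) auto
    next
      case False
      then show ?thesis using that d by (intro bexI[of _ v2]) auto
    qed
  qed (use vV w in auto)
  have B: ?thesis if "gdist V E v2 w = 1 \<or> (gdist V E v3 w \<noteq> 1 \<and> gdist V E v1 w \<noteq> 1 \<and> gdist V E v2 w \<noteq> 1)"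
  proof (rule key_col[of v1 v2 v3 v0 w])
    show "inj_on (\<lambda>x. gdist V E x v0) {v1, v2, v3}" using d' by auto
    show "distinct [v1, v2, v3, v0, w]" using ne wne by auto
    show "\<exists>x\<in>{v1, v2, v3}. \<forall>y\<in>{v1, v2, v3}. gdist V E y w \<noteq> gdist V E x v0"
    proof (cases "gdist V E v2 w = 1")
      case True
      have "gdist V E v1 w \<le> 2" using tri[OF vV(2) vV(3) w(1)] d True by simp
      moreover have "gdist V E v3 w \<le> 2" using tri[OF vV(4) vV(3) w(1)] d' True by simp
      ultimately show ?thesis using d' True by (intro bexI[of _ v3]) auto
    next
      case False
      then show ?thesis using that d' by (intro bexI[of _ v1]) auto
    qed
  qed (use vV w in auto)
  show ?thesis
  proof (cases "gdist V E v1 w = 1 \<or> (gdist V E v0 w \<noteq> 1 \<and> gdist V E v1 w \<noteq> 1 \<and> gdist V E v2 w \<noteq> 1)")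
    case True then show ?thesis by (rule A)
  next
    case F1: False
    show ?thesis
    proof (cases "gdist V E v2 w = 1 \<or> (gdist V E v3 w \<noteq> 1 \<and> gdist V E v1 w \<noteq> 1 \<and> gdist V E v2 w \<noteq> 1)")
      case True then show ?thesis by (rule B)
    next
      case False
      then have "gdist V E v0 w = 1" "gdist V E w v3 = 1" using F1 gdist_sym[OF w(1) vV(4)] by auto
      then have "gdist V E v0 v3 \<le> 2" using tri[OF vV(1) w(1) vV(4)] by simp
      then show ?thesis using d by simp
    qed
  qed
qed


lemma four:
  assumes "diameter V E \<ge> 3" "card V \<le> 4"
  shows "iso_P4 V E"
proof -
  obtain v0 v1 v2 v3 where vV: "v0 \<in> V" "v1 \<in> V" "v2 \<in> V" "v3 \<in> V" and
    d: "gdist V E v0 v1 = 1" "gdist V E v0 v2 = 2" "gdist V E v0 v3 = 3"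
     "gdist V E v1 v2 = 1" "gdist V E v1 v3 = 2" "gdist V E v2 v3 = 1"
    using diam_path[OF assms(1)] by blast
  have d': "gdist V E v1 v0 = 1" "gdist V E v2 v0 = 2" "gdist V E v3 v0 = 3"
     "gdist V E v2 v1 = 1" "gdist V E v3 v1 = 2" "gdist V E v3 v2 = 1"
    using d gdist_sym vV by metis+
  have d0: "gdist V E v0 v0 = 0" "gdist V E v1 v1 = 0" "gdist V E v2 v2 = 0" "gdist V E v3 v3 = 0"
    using gdist_0 vV by auto
  have ne: "v0 \<noteq> v1" "v0 \<noteq> v2" "v0 \<noteq> v3" "v1 \<noteq> v2" "v1 \<noteq> v3" "v2 \<noteq> v3"
    using d gdist_0 vV by force+
  have finV: "finite V" using G by (simp add: simple_graph_def)
  have c4: "card {v0,v1,v2,v3} = 4" using ne by auto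
  have sub: "{v0,v1,v2,v3} \<subseteq> V" using vV by auto
  have Veq: "V = {v0,v1,v2,v3}" using card_subset_eq[OF finV sub] c4 assms(2) card_mono[OF finV sub]
    by simp
  define f where "f x = (if x = v0 then 0 else if x = v1 then 1 else if x = v2 then 2 else (3::nat))" for x
  show ?thesis unfolding iso_P4_def
  proof (intro exI[of _ f] conjI ballI)
    show "bij_betw f V {0..<4}" unfolding bij_betw_def
    proof
      show "inj_on f V" unfolding Veq inj_on_def f_def using ne by auto
      show "f ` V = {0..<4}"
      proof
        show "f ` V \<subseteq> {0..<4}" unfolding f_def by auto
        show "{0..<4} \<subseteq> f ` V"
        proof
          fix i :: nat assume "i \<in> {0..<4}"
          then have "i = f v0 \<or> i = f v1 \<or> i = f v2 \<or> i = f v3" unfolding f_def using ne by auto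
          then show "i \<in> f ` V" using vV by blast
        qed
      qed
    qed
    have all: "\<forall>x\<in>{v0,v1,v2,v3}. \<forall>y\<in>{v0,v1,v2,v3}. gdist V E x y = 1 \<longleftrightarrow> (f x = Suc (f y) \<or> f y = Suc (f x))"
      unfolding f_def by (simp add: d d' d0 ne ne[symmetric])
    fix x y assume xy: "x \<in> V" "y \<in> V"
    have "E x y \<longleftrightarrow> gdist V E x y = 1" using gdist_1_iff xy by blast
    then show "E x y \<longleftrightarrow> (f x = Suc (f y) \<or> f y = Suc (f x))"
      using all xy Veq by blast
  qed
qed

lemma card_ge4:
  assumes "diameter V E \<ge> 3"
  shows "card V \<ge> 4"
proof -
  obtain v0 v1 v2 v3 where vV: "v0 \<in> V" "v1 \<in> V" "v2 \<in> V" "v3 \<in> V" and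
    d: "gdist V E v0 v1 = 1" "gdist V E v0 v2 = 2" "gdist V E v0 v3 = 3"
     "gdist V E v1 v2 = 1" "gdist V E v1 v3 = 2" "gdist V E v2 v3 = 1"
    using diam_path[OF assms(1)] by blast
  have ne: "v0 \<noteq> v1" "v0 \<noteq> v2" "v0 \<noteq> v3" "v1 \<noteq> v2" "v1 \<noteq> v3" "v2 \<noteq> v3"
    using d gdist_0 vV by force+
  have finV: "finite V" using G by (simp add: simple_graph_def)
  have "card {v0,v1,v2,v3} = 4" using ne by auto
  moreover have "{v0,v1,v2,v3} \<subseteq> V" using vV by auto
  ultimately show ?thesis using card_mono[OF finV, of "{v0,v1,v2,v3}"] by simp
qed

end

lemma P4_D:
  assumes "iso_P4 V E"
  shows "distinguishing_number V E = 2" "card V = 4"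
proof -
  obtain f where bf: "bij_betw f V {0..<4::nat}"
    and Ef: "\<forall>x\<in>V. \<forall>y\<in>V. E x y \<longleftrightarrow> (f x = Suc (f y) \<or> f y = Suc (f x))"
    using assms unfolding iso_P4_def by blast
  have Ef': "\<And>x y. x \<in> V \<Longrightarrow> y \<in> V \<Longrightarrow> E x y \<longleftrightarrow> (f x = Suc (f y) \<or> f y = Suc (f x))"
    using Ef by blast
  show cV: "card V = 4" using bij_betw_same_card[OF bf] by simp
  let ?a = "the_inv_into V f"
  have bi: "bij_betw ?a {0..<4} V" using bij_betw_the_inv_into[OF bf] .
  have aV: "i < 4 \<Longrightarrow> ?a i \<in> V" for i using bi by (auto simp: bij_betw_def)
  have fa: "i < 4 \<Longrightarrow> f (?a i) = i" for i using bf by (auto simp: bij_betw_def f_the_inv_into_f)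
  have fV: "x \<in> V \<Longrightarrow> f x < 4" for x using bf by (auto simp: bij_betw_def)
  have finj: "inj_on f V" using bf by (simp add: bij_betw_def)
  have af: "x \<in> V \<Longrightarrow> ?a (f x) = x" for x using bf by (auto simp: bij_betw_def the_inv_into_f_f)
  define col where "col x = (if f x = 0 then 1 else (0::nat))" for x
  have good: "distinguishing_coloring V E 2 col"
    unfolding distinguishing_coloring_def
  proof (intro conjI allI impI)
    show "col ` V \<subseteq> {..<2}" unfolding col_def by auto
    fix h assume ha: "automorphism V E h \<and> (\<forall>x\<in>V. col (h x) = col x)"
    have bh: "bij_betw h V V" and Eh: "\<And>x y. x \<in> V \<Longrightarrow> y \<in> V \<Longrightarrow> E x y \<longleftrightarrow> E (h x) (h y)"
      and ch: "\<And>x. x \<in> V \<Longrightarrow> col (h x) = col x"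
      using ha unfolding automorphism_def by auto
    have hV: "x \<in> V \<Longrightarrow> h x \<in> V" for x using bh by (auto simp: bij_betw_def)
    have hinj: "inj_on h V" using bh by (simp add: bij_betw_def)
    have main: "\<forall>x\<in>V. f x = i \<longrightarrow> f (h x) = i" if "i < 4" for i
      using that
    proof (induction i rule: less_induct)
      case (less i)
      show ?case
      proof (intro ballI impI)
        fix x assume x: "x \<in> V" "f x = i"
        show "f (h x) = i"
        proof (cases i)
          case 0
          then show ?thesis using ch[OF x(1)] x unfolding col_def by (auto split: if_splits)
        next
          case (Suc j)
          have j4: "j < 4" using less Suc by simp
          have e: "E x (?a j)" using Ef'[OF x(1) aV[OF j4]] x fa[OF j4] Suc by simp
          have hj: "f (h (?a j)) = j" using less.IH[of j] Suc j4 aV fa by auto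
          have "E (h x) (h (?a j))" using Eh[OF x(1) aV[OF j4]] e by simp
          then have o: "f (h x) = Suc j \<or> Suc (f (h x)) = j" using Ef'[OF hV[OF x(1)] hV[OF aV[OF j4]]] hj by auto
          show ?thesis
          proof (cases "f (h x) = Suc j")
            case True then show ?thesis using Suc by simp
          next
            case False
            then obtain k where k: "j = Suc k" "f (h x) = k" using o by auto
            have k4: "k < 4" using j4 k by simp
            have "f (h (?a k)) = k" using less.IH[of k] Suc k k4 aV fa by auto
            then have "h x = h (?a k)" using finj hV[OF x(1)] hV[OF aV[OF k4]] k by (auto dest: inj_onD)
            then have "x = ?a k" using hinj x(1) aV[OF k4] by (auto dest: inj_onD)
            then show ?thesis using x fa[OF k4] Suc k by simp
          qed
        qed
      qed
    qed
    show "\<forall>x\<in>V. h x = x"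
    proof
      fix x assume x: "x \<in> V"
      have "f (h x) = f x" using main[OF fV[OF x]] x by blast
      then show "h x = x" using finj hV[OF x] x by (auto dest: inj_onD)
    qed
  qed
  have bad: "\<not> distinguishing_coloring V E k c" if "k < 2" for k c
  proof
    assume dc: "distinguishing_coloring V E k c"
    have "V \<noteq> {}" using cV by auto
    then have "k \<noteq> 0" using dc unfolding distinguishing_coloring_def by auto
    then have k1: "k = 1" using that by simp
    then have c0: "\<And>x. x \<in> V \<Longrightarrow> c x = 0" using dc unfolding distinguishing_coloring_def by auto
    define g where "g x = ?a (3 - f x)" for x
    have gV: "x \<in> V \<Longrightarrow> g x \<in> V" for x unfolding g_def using aV by simp
    have fg: "x \<in> V \<Longrightarrow> f (g x) = 3 - f x" for x unfolding g_def using fa by simp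
    have aut: "automorphism V E g" unfolding automorphism_def
    proof (intro conjI ballI)
      have "inj_on g V"
      proof
        fix x y assume "x \<in> V" "y \<in> V" "g x = g y"
        then have "3 - f x = 3 - f y" using fg by metis
        then have "f x = f y" using fV[OF \<open>x \<in> V\<close>] fV[OF \<open>y \<in> V\<close>] by arith
        then show "x = y" using finj \<open>x \<in> V\<close> \<open>y \<in> V\<close> by (auto dest: inj_onD)
      qed
      moreover have "g ` V = V"
      proof
        show "g ` V \<subseteq> V" using gV by auto
        show "V \<subseteq> g ` V"
        proof
          fix y assume y: "y \<in> V"
          have "3 - f y < 4" by simp
          then have "g (?a (3 - f y)) = y" unfolding g_def using fa fV[OF y] af[OF y] by simp
          then show "y \<in> g ` V" using aV by (metis \<open>3 - f y < 4\<close> imageI)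
        qed
      qed
      ultimately show "bij_betw g V V" by (simp add: bij_betw_def)
      fix x y assume xy: "x \<in> V" "y \<in> V"
      show "E x y = E (g x) (g y)" unfolding Ef'[OF xy] Ef'[OF gV[OF xy(1)] gV[OF xy(2)]] fg[OF xy(1)] fg[OF xy(2)]
        using fV[OF xy(1)] fV[OF xy(2)] by arith
    qed
    have "\<forall>x\<in>V. g x = x" using dc aut c0 gV unfolding distinguishing_coloring_def by auto
    moreover have "g (?a 0) = ?a 3" unfolding g_def using fa by simp
    moreover have "?a 0 \<noteq> ?a 3" using fa[of 0] fa[of 3] by force
    ultimately show False using aV[of 0] by auto
  qed
  show "distinguishing_number V E = 2" unfolding distinguishing_number_def
  proof (rule Least_equality)
    show "\<exists>c. distinguishing_coloring V E 2 c" using good by blast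
    fix k assume "\<exists>c. distinguishing_coloring V E k c"
    then show "2 \<le> k" using bad by (meson not_le)
  qed
qed

theorem lemma4p12:
  fixes V :: "'a set" and E :: "'a \<Rightarrow> 'a \<Rightarrow> bool"
  assumes "simple_graph V E"
    and "connected_graph V E"
    and "diameter V E \<in> {3, 4}"
    and "metric_dim V E = card V - diameter V E"
  shows "distinguishing_number V E = card V - 2 \<longleftrightarrow> iso_P4 V E"
proof
  have d3: "diameter V E \<ge> 3" using assms(3) by auto
  assume D: "distinguishing_number V E = card V - 2"
  show "iso_P4 V E"
  proof (cases "card V \<le> 4")
    case True
    then show ?thesis using four[OF assms(1,2) d3] by simp
  next
    case False
    then obtain col where "distinguishing_coloring V E (card V - 3) col"
      using big_col[OF assms(1,2) d3] by auto
    then have "distinguishing_number V E \<le> card V - 3"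
      unfolding distinguishing_number_def by (intro Least_le) blast
    then show ?thesis using D False by simp
  qed
next
  assume "iso_P4 V E"
  then show "distinguishing_number V E = card V - 2" using P4_D[of V E] by simp
qed

end
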